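(* Let $X,Y$ be non-empty subsets of $A^+$, and say that $XY$ is a strong alt-induced code (via $(X,Y)$) when $(X,Y)$ is a strong alternative code. (i) $XY$ is a prefix strong alt-induced code via $(X,Y)$ if and only if $X$ is a prefix code and $Y$ is a bifix code; and $XY$ is a maximal prefix strong alt-induced code via $(X,Y)$ if and only if $X$ is a maximal prefix code and $Y$ is both a maximal prefix code and a bifix code. (ii) $XY$ is a suffix strong alt-induced code via $(X,Y)$ if and only if $X$ is a bifix code and $Y$ is a suffix code; and $XY$ is a maximal suffix strong alt-induced code via $(X,Y)$ if and only if $X$ is both a maximal suffix code and a bifix code and $Y$ is a maximal suffix code. (iii) $XY$ is a bifix (resp. thin maximal bifix) strong alt-induced code via $(X,Y)$ if and only if $X$ and $Y$ are bifix (resp. thin maximal bifix) codes.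
   Context: $A$ is a finite alphabet, $A^*$ the set of words, $A^+$ the non-empty words, $XY=\{xy:x\in X,y\in Y\}$. For $X,Z\subseteq A^*$: $X^{-1}Z=\{u\in A^*: xu\in Z \text{ for some } x\in X\}$, $ZY^{-1}=\{u\in A^*: uy\in Z\text{ for some } y\in Y\}$. A code is a subset of $A^+$ in which every word has at most one factorization into its elements. A prefix (suffix) code is a subset of $A^+$ in which no word is a proper prefix (suffix) of another; a bifix code is both; such a code is maximal if not properly contained in another prefix (suffix, bifix) code over $A$. A set is thin if some word of $A^*$ is not a factor of any of its words. For non-empty $X,Y\subseteq A^+$, $(X,Y)$ is an alternative code if $XY$ is a code and each element of $XY$ has exactly one factorization $xy$ with $x\in X,y\in Y$ (equivalently, no word admits two different similar alternative factorizations on $(X,Y)$). It is a strong alternative code if moreover $X^{-1}(XY)\subseteq Y$ and $(XY)Y^{-1}\subseteq X$. A prefix (maximal prefix, suffix, ...) strong alt-induced code is a strong alt-induced code that is also a prefix (maximal prefix, suffix, ...) code. *)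

theory Defs
  imports "HOL-Library.Sublist"
begin

text \<open>Words over a finite alphabet: the alphabet is the type 'a (class finite),
  words are lists. A^+ is the set of non-empty lists.\<close>

definition conc :: "'a list set \<Rightarrow> 'a list set \<Rightarrow> 'a list set" where
  "conc X Y = {x @ y | x y. x \<in> X \<and> y \<in> Y}"

definition lquot :: "'a list set \<Rightarrow> 'a list set \<Rightarrow> 'a list set" where
  "lquot X Z = {u. \<exists>x\<in>X. x @ u \<in> Z}"

definition rquot :: "'a list set \<Rightarrow> 'a list set \<Rightarrow> 'a list set" where
  "rquot Z Y = {u. \<exists>y\<in>Y. u @ y \<in> Z}"

definition code :: "'a list set \<Rightarrow> bool" where
  "code X \<longleftrightarrow> [] \<notin> X \<and>
     (\<forall>xs ys. set xs \<subseteq> X \<longrightarrow> set ys \<subseteq> X \<longrightarrow> concat xs = concat ys \<longrightarrow> xs = ys)"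

definition prefix_code :: "'a list set \<Rightarrow> bool" where
  "prefix_code X \<longleftrightarrow> [] \<notin> X \<and> (\<forall>u\<in>X. \<forall>v\<in>X. strict_prefix u v \<longrightarrow> False)"

definition suffix_code :: "'a list set \<Rightarrow> bool" where
  "suffix_code X \<longleftrightarrow> [] \<notin> X \<and> (\<forall>u\<in>X. \<forall>v\<in>X. strict_suffix u v \<longrightarrow> False)"

definition bifix_code :: "'a list set \<Rightarrow> bool" where
  "bifix_code X \<longleftrightarrow> prefix_code X \<and> suffix_code X"

definition maximal_prefix_code :: "'a list set \<Rightarrow> bool" where
  "maximal_prefix_code X \<longleftrightarrow> prefix_code X \<and> (\<forall>Z. prefix_code Z \<and> X \<subseteq> Z \<longrightarrow> Z = X)"

definition maximal_suffix_code :: "'a list set \<Rightarrow> bool" where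
  "maximal_suffix_code X \<longleftrightarrow> suffix_code X \<and> (\<forall>Z. suffix_code Z \<and> X \<subseteq> Z \<longrightarrow> Z = X)"

definition maximal_bifix_code :: "'a list set \<Rightarrow> bool" where
  "maximal_bifix_code X \<longleftrightarrow> bifix_code X \<and> (\<forall>Z. bifix_code Z \<and> X \<subseteq> Z \<longrightarrow> Z = X)"

definition thin :: "'a list set \<Rightarrow> bool" where
  "thin X \<longleftrightarrow> (\<exists>w. \<forall>x\<in>X. \<not> sublist w x)"

definition alternative_code :: "'a list set \<Rightarrow> 'a list set \<Rightarrow> bool" where
  "alternative_code X Y \<longleftrightarrow>
     X \<noteq> {} \<and> Y \<noteq> {} \<and> [] \<notin> X \<and> [] \<notin> Y \<and> code (conc X Y) \<and>
     (\<forall>x\<in>X. \<forall>y\<in>Y. \<forall>x'\<in>X. \<forall>y'\<in>Y. x @ y = x' @ y' \<longrightarrow> x = x' \<and> y = y')"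

definition strong_alternative_code :: "'a list set \<Rightarrow> 'a list set \<Rightarrow> bool" where
  "strong_alternative_code X Y \<longleftrightarrow>
     alternative_code X Y \<and> lquot X (conc X Y) \<subseteq> Y \<and> rquot (conc X Y) Y \<subseteq> X"

end

theory Submission
  imports Defs
begin


lemma pc_eq: "prefix_code X \<Longrightarrow> x \<in> X \<Longrightarrow> x' \<in> X \<Longrightarrow> prefix x x' \<Longrightarrow> x = x'"
  unfolding prefix_code_def strict_prefix_def by blast
lemma sc_eq: "suffix_code X \<Longrightarrow> x \<in> X \<Longrightarrow> x' \<in> X \<Longrightarrow> suffix x x' \<Longrightarrow> x = x'"
  unfolding suffix_code_def strict_suffix_def by blast

lemma pc_cancel: assumes "prefix_code X" "x \<in> X" "x' \<in> X" "x @ a = x' @ b" shows "x = x' \<and> a = b"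
proof -
  have "prefix x (x'@b)" "prefix x' (x'@b)" using assms(4) by (metis prefixI)+
  then have "prefix x x' \<or> prefix x' x" using prefix_same_cases by blast
  then have "x = x'" using pc_eq[OF assms(1)] assms(2,3) by metis
  then show ?thesis using assms(4) by simp
qed

lemma sc_cancel: assumes "suffix_code X" "y \<in> X" "y' \<in> X" "a @ y = b @ y'" shows "y = y' \<and> a = b"
proof -
  have "suffix y (b@y')" "suffix y' (b@y')" using assms(4) by (metis suffixI)+
  then have "suffix y y' \<or> suffix y' y" using suffix_same_cases by blast
  then have "y = y'" using sc_eq[OF assms(1)] assms(2,3) by metis
  then show ?thesis using assms(4) by simp
qed

lemma concat_nil_set: "[] \<notin> X \<Longrightarrow> set xs \<subseteq> X \<Longrightarrow> concat xs = [] \<Longrightarrow> xs = []"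
  by (cases xs) auto

lemma prefix_code_code: assumes "prefix_code X" shows "code X"
proof -
  have ne: "[] \<notin> X" using assms prefix_code_def by blast
  have "\<And>ys. set xs \<subseteq> X \<Longrightarrow> set ys \<subseteq> X \<Longrightarrow> concat xs = concat ys \<Longrightarrow> xs = ys" for xs
  proof (induction xs)
    case Nil then show ?case using concat_nil_set[OF ne, of ys] by simp
  next
    case (Cons a as)
    show ?case
    proof (cases ys)
      case Nil then show ?thesis using Cons.prems concat_nil_set[OF ne, of "a#as"] by simp
    next
      case (Cons b bs)
      have ab: "a \<in> X" "b \<in> X" "set as \<subseteq> X" "set bs \<subseteq> X" using Cons.prems \<open>ys = b#bs\<close> by auto
      have "a @ concat as = b @ concat bs" using Cons.prems \<open>ys = b#bs\<close> by simp
      from pc_cancel[OF assms ab(1,2) this] have "a = b" "concat as = concat bs" by auto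
      then show ?thesis using Cons.IH[OF ab(3,4)] \<open>ys = b#bs\<close> by simp
    qed
  qed
  then show ?thesis using ne code_def by blast
qed

lemma suffix_code_code: assumes "suffix_code X" shows "code X"
proof -
  have ne: "[] \<notin> X" using assms suffix_code_def by blast
  have "\<And>ys. set xs \<subseteq> X \<Longrightarrow> set ys \<subseteq> X \<Longrightarrow> concat xs = concat ys \<Longrightarrow> xs = ys" for xs
  proof (induction xs rule: rev_induct)
    case Nil then show ?case using concat_nil_set[OF ne, of ys] by simp
  next
    case (snoc a as)
    show ?case
    proof (cases ys rule: rev_exhaust)
      case Nil then show ?thesis using snoc.prems concat_nil_set[OF ne, of "as@[a]"] by simp
    next
      case (snoc bs b)
      have ab: "a \<in> X" "b \<in> X" "set as \<subseteq> X" "set bs \<subseteq> X" using snoc.prems \<open>ys = bs@[b]\<close> by auto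
      have "concat as @ a = concat bs @ b" using snoc.prems \<open>ys = bs@[b]\<close> by simp
      from sc_cancel[OF assms ab(1,2) this] have "a = b" "concat as = concat bs" by auto
      then show ?thesis using snoc.IH[OF ab(3,4)] \<open>ys = bs@[b]\<close> by simp
    qed
  qed
  then show ?thesis using ne code_def by blast
qed

lemma conc_ne: "[] \<notin> X \<Longrightarrow> [] \<notin> conc X Y" unfolding conc_def by auto

lemma prefix_conc: assumes "prefix_code X" "prefix_code Y" shows "prefix_code (conc X Y)"
  unfolding prefix_code_def
proof (intro conjI ballI impI)
  show "[] \<notin> conc X Y" using assms conc_ne prefix_code_def by blast
  fix u v assume "u \<in> conc X Y" "v \<in> conc X Y" "strict_prefix u v"
  obtain x y where u: "u = x@y" "x \<in> X" "y \<in> Y" using \<open>u \<in> conc X Y\<close> unfolding conc_def by blast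
  obtain x' y' where v: "v = x'@y'" "x' \<in> X" "y' \<in> Y" using \<open>v \<in> conc X Y\<close> unfolding conc_def by blast
  obtain q where q: "v = u @ q" "q \<noteq> []" using \<open>strict_prefix u v\<close> unfolding strict_prefix_def prefix_def by auto
  from pc_cancel[OF assms(1) u(2) v(2), of "y@q" y'] have "x = x'" "y@q = y'" using u v q by auto
  then show False using pc_eq[OF assms(2) u(3) v(3)] q by auto
qed

lemma suffix_conc: assumes "suffix_code X" "suffix_code Y" shows "suffix_code (conc X Y)"
  unfolding suffix_code_def
proof (intro conjI ballI impI)
  show "[] \<notin> conc X Y" using assms conc_ne suffix_code_def by blast
  fix u v assume "u \<in> conc X Y" "v \<in> conc X Y" "strict_suffix u v"
  obtain x y where u: "u = x@y" "x \<in> X" "y \<in> Y" using \<open>u \<in> conc X Y\<close> unfolding conc_def by blast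
  obtain x' y' where v: "v = x'@y'" "x' \<in> X" "y' \<in> Y" using \<open>v \<in> conc X Y\<close> unfolding conc_def by blast
  obtain q where q: "v = q @ u" "q \<noteq> []" using \<open>strict_suffix u v\<close> unfolding strict_suffix_def suffix_def by auto
  from sc_cancel[OF assms(2) u(3) v(3), of "q@x" x'] have "y = y'" "q@x = x'" using u v q by auto
  then have "suffix x x'" by (metis suffixI)
  then have "x = x'" using sc_eq[OF assms(1) u(2) v(2)] by blast
  then show False using \<open>q@x = x'\<close> q by simp
qed

lemma conc_in: "x \<in> X \<Longrightarrow> y \<in> Y \<Longrightarrow> x@y \<in> conc X Y" unfolding conc_def by blast

lemma SA_intro: assumes "X \<noteq> {}" "Y \<noteq> {}" "prefix_code X" "suffix_code Y" "code (conc X Y)"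
  shows "strong_alternative_code X Y"
proof -
  have ne: "[] \<notin> X" "[] \<notin> Y" using assms prefix_code_def suffix_code_def by blast+
  have "lquot X (conc X Y) \<subseteq> Y"
  proof
    fix u assume "u \<in> lquot X (conc X Y)"
    then obtain x x' y where "x \<in> X" "x' \<in> X" "y \<in> Y" "x@u = x'@y" unfolding lquot_def conc_def by blast
    then show "u \<in> Y" using pc_cancel[OF assms(3)] by metis
  qed
  moreover have "rquot (conc X Y) Y \<subseteq> X"
  proof
    fix u assume "u \<in> rquot (conc X Y) Y"
    then obtain y x y' where "y \<in> Y" "x \<in> X" "y' \<in> Y" "u@y = x@y'" unfolding rquot_def conc_def by blast
    then show "u \<in> X" using sc_cancel[OF assms(4)] by metis
  qed
  moreover have "\<forall>x\<in>X. \<forall>y\<in>Y. \<forall>x'\<in>X. \<forall>y'\<in>Y. x @ y = x' @ y' \<longrightarrow> x = x' \<and> y = y'"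
    using pc_cancel[OF assms(3)] by blast
  ultimately show ?thesis unfolding strong_alternative_code_def alternative_code_def using assms ne by blast
qed

lemma SA_prefix_intro: "X \<noteq> {} \<Longrightarrow> Y \<noteq> {} \<Longrightarrow> prefix_code X \<Longrightarrow> bifix_code Y \<Longrightarrow> strong_alternative_code X Y"
  using SA_intro prefix_code_code prefix_conc bifix_code_def by metis
lemma SA_suffix_intro: "X \<noteq> {} \<Longrightarrow> Y \<noteq> {} \<Longrightarrow> bifix_code X \<Longrightarrow> suffix_code Y \<Longrightarrow> strong_alternative_code X Y"
  using SA_intro suffix_code_code suffix_conc bifix_code_def by metis

lemma SA_uniq: "strong_alternative_code X Y \<Longrightarrow> x \<in> X \<Longrightarrow> y \<in> Y \<Longrightarrow> x' \<in> X \<Longrightarrow> y' \<in> Y \<Longrightarrow> x@y = x'@y' \<Longrightarrow> x = x' \<and> y = y'"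
  unfolding strong_alternative_code_def alternative_code_def by blast
lemma SA_lq: "strong_alternative_code X Y \<Longrightarrow> x \<in> X \<Longrightarrow> x@u \<in> conc X Y \<Longrightarrow> u \<in> Y"
  unfolding strong_alternative_code_def lquot_def by blast
lemma SA_rq: "strong_alternative_code X Y \<Longrightarrow> y \<in> Y \<Longrightarrow> u@y \<in> conc X Y \<Longrightarrow> u \<in> X"
  unfolding strong_alternative_code_def rquot_def by blast

lemma SA_ne: "strong_alternative_code X Y \<Longrightarrow> X \<noteq> {} \<and> Y \<noteq> {} \<and> [] \<notin> X \<and> [] \<notin> Y"
  unfolding strong_alternative_code_def alternative_code_def by blast

lemma SA_prefix_dest: assumes "strong_alternative_code X Y" "prefix_code (conc X Y)"
  shows "prefix_code X \<and> bifix_code Y"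
proof -
  note ne = SA_ne[OF assms(1)]
  obtain x0 where x0: "x0 \<in> X" using ne by blast
  obtain y0 where y0: "y0 \<in> Y" using ne by blast
  have "prefix_code X" unfolding prefix_code_def
  proof (intro conjI ballI impI)
    show "[] \<notin> X" using ne by blast
    fix x x' assume xx: "x \<in> X" "x' \<in> X" "strict_prefix x x'"
    then obtain w where w: "x' = x@w" "w \<noteq> []" unfolding strict_prefix_def prefix_def by auto
    have "x@(w@y0) \<in> conc X Y" using conc_in[OF xx(2) y0] w by simp
    then have "w@y0 \<in> Y" using SA_lq[OF assms(1) xx(1)] by blast
    then have "x = x'" using SA_uniq[OF assms(1) xx(1) _ xx(2) y0, of "w@y0"] w by simp
    then show False using w by simp
  qed
  moreover have "prefix_code Y" unfolding prefix_code_def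
  proof (intro conjI ballI impI)
    show "[] \<notin> Y" using ne by blast
    fix y y' assume yy: "y \<in> Y" "y' \<in> Y" "strict_prefix y y'"
    then have "strict_prefix (x0@y) (x0@y')" by (simp add: strict_prefix_def)
    then show False using assms(2) conc_in[OF x0 yy(1)] conc_in[OF x0 yy(2)] unfolding prefix_code_def by blast
  qed
  moreover have "suffix_code Y" unfolding suffix_code_def
  proof (intro conjI ballI impI)
    show "[] \<notin> Y" using ne by blast
    fix y y' assume yy: "y \<in> Y" "y' \<in> Y" "strict_suffix y y'"
    then obtain w where w: "y' = w@y" "w \<noteq> []" unfolding strict_suffix_def suffix_def by auto
    have "(x0@w)@y \<in> conc X Y" using conc_in[OF x0 yy(2)] w by simp
    then have "x0@w \<in> X" using SA_rq[OF assms(1) yy(1)] by blast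
    then have "x0@w = x0" using SA_uniq[OF assms(1) _ yy(1) x0 yy(2)] w by simp
    then show False using w by simp
  qed
  ultimately show ?thesis unfolding bifix_code_def by blast
qed

lemma SA_suffix_dest: assumes "strong_alternative_code X Y" "suffix_code (conc X Y)"
  shows "bifix_code X \<and> suffix_code Y"
proof -
  note ne = SA_ne[OF assms(1)]
  obtain x0 where x0: "x0 \<in> X" using ne by blast
  obtain y0 where y0: "y0 \<in> Y" using ne by blast
  have "suffix_code Y" unfolding suffix_code_def
  proof (intro conjI ballI impI)
    show "[] \<notin> Y" using ne by blast
    fix y y' assume yy: "y \<in> Y" "y' \<in> Y" "strict_suffix y y'"
    then obtain w where w: "y' = w@y" "w \<noteq> []" unfolding strict_suffix_def suffix_def by auto
    have "(x0@w)@y \<in> conc X Y" using conc_in[OF x0 yy(2)] w by simp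
    then have "x0@w \<in> X" using SA_rq[OF assms(1) yy(1)] by blast
    then have "y = y'" using SA_uniq[OF assms(1) _ yy(1) x0 yy(2)] w by simp
    then show False using w by simp
  qed
  moreover have "suffix_code X" unfolding suffix_code_def
  proof (intro conjI ballI impI)
    show "[] \<notin> X" using ne by blast
    fix x x' assume xx: "x \<in> X" "x' \<in> X" "strict_suffix x x'"
    then have "strict_suffix (x@y0) (x'@y0)" by (auto simp: strict_suffix_def suffix_def)
    then show False using assms(2) conc_in[OF xx(1) y0] conc_in[OF xx(2) y0] unfolding suffix_code_def by blast
  qed
  moreover have "prefix_code X" unfolding prefix_code_def
  proof (intro conjI ballI impI)
    show "[] \<notin> X" using ne by blast
    fix x x' assume xx: "x \<in> X" "x' \<in> X" "strict_prefix x x'"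
    then obtain w where w: "x' = x@w" "w \<noteq> []" unfolding strict_prefix_def prefix_def by auto
    have "x@(w@y0) \<in> conc X Y" using conc_in[OF xx(2) y0] w by simp
    then have "w@y0 \<in> Y" using SA_lq[OF assms(1) xx(1)] by blast
    then have "x = x'" using SA_uniq[OF assms(1) xx(1) _ xx(2) y0, of "w@y0"] w by simp
    then show False using w by simp
  qed
  ultimately show ?thesis unfolding bifix_code_def by blast
qed

definition rcomp :: "'a list set \<Rightarrow> bool" where
  "rcomp X \<longleftrightarrow> (\<forall>w. \<exists>x\<in>X. prefix x w \<or> prefix w x)"
definition lcomp :: "'a list set \<Rightarrow> bool" where
  "lcomp X \<longleftrightarrow> (\<forall>w. \<exists>x\<in>X. suffix x w \<or> suffix w x)"

lemma pc_strict: "prefix_code Z \<Longrightarrow> u \<in> Z \<Longrightarrow> v \<in> Z \<Longrightarrow> prefix u v \<Longrightarrow> u = v"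
  using pc_eq by blast

lemma max_prefix_iff: assumes "prefix_code X" "X \<noteq> {}"
  shows "maximal_prefix_code X \<longleftrightarrow> rcomp X"
proof
  assume m: "maximal_prefix_code X"
  show "rcomp X"
  proof (rule ccontr)
    assume "\<not> rcomp X"
    then obtain w where w: "\<forall>x\<in>X. \<not> prefix x w \<and> \<not> prefix w x" unfolding rcomp_def by blast
    have wne: "w \<noteq> []" using w assms(2) by auto
    have wX: "w \<notin> X" using w by auto
    have "prefix_code (insert w X)" unfolding prefix_code_def
    proof (intro conjI ballI impI)
      show "[] \<notin> insert w X" using wne assms(1) prefix_code_def by auto
      fix u v assume uv: "u \<in> insert w X" "v \<in> insert w X" "strict_prefix u v"
      then show False using w assms(1) unfolding prefix_code_def
        by (auto simp: strict_prefix_def)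
    qed
    then have "insert w X = X" using m unfolding maximal_prefix_code_def by blast
    then show False using wX by blast
  qed
next
  assume r: "rcomp X"
  show "maximal_prefix_code X" unfolding maximal_prefix_code_def
  proof (intro conjI allI impI assms(1))
    fix Z assume Z: "prefix_code Z \<and> X \<subseteq> Z"
    show "Z = X"
    proof
      show "Z \<subseteq> X"
      proof
        fix z assume "z \<in> Z"
        obtain x where "x \<in> X" "prefix x z \<or> prefix z x" using r unfolding rcomp_def by blast
        then have "z = x" using pc_strict[of Z] Z \<open>z \<in> Z\<close> by blast
        then show "z \<in> X" using \<open>x \<in> X\<close> by simp
      qed
    qed (use Z in blast)
  qed
qed

lemma sc_strict: "suffix_code Z \<Longrightarrow> u \<in> Z \<Longrightarrow> v \<in> Z \<Longrightarrow> suffix u v \<Longrightarrow> u = v"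
  using sc_eq by blast

lemma max_suffix_iff: assumes "suffix_code X" "X \<noteq> {}"
  shows "maximal_suffix_code X \<longleftrightarrow> lcomp X"
proof
  assume m: "maximal_suffix_code X"
  show "lcomp X"
  proof (rule ccontr)
    assume "\<not> lcomp X"
    then obtain w where w: "\<forall>x\<in>X. \<not> suffix x w \<and> \<not> suffix w x" unfolding lcomp_def by blast
    have wne: "w \<noteq> []" using w assms(2) by auto
    have wX: "w \<notin> X" using w by auto
    have "suffix_code (insert w X)" unfolding suffix_code_def
    proof (intro conjI ballI impI)
      show "[] \<notin> insert w X" using wne assms(1) suffix_code_def by auto
      fix u v assume uv: "u \<in> insert w X" "v \<in> insert w X" "strict_suffix u v"
      then show False using w assms(1) unfolding suffix_code_def
        by (auto simp: strict_suffix_def)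
    qed
    then have "insert w X = X" using m unfolding maximal_suffix_code_def by blast
    then show False using wX by blast
  qed
next
  assume r: "lcomp X"
  show "maximal_suffix_code X" unfolding maximal_suffix_code_def
  proof (intro conjI allI impI assms(1))
    fix Z assume Z: "suffix_code Z \<and> X \<subseteq> Z"
    show "Z = X"
    proof
      show "Z \<subseteq> X"
      proof
        fix z assume "z \<in> Z"
        obtain x where "x \<in> X" "suffix x z \<or> suffix z x" using r unfolding lcomp_def by blast
        then have "z = x" using sc_strict[of Z] Z \<open>z \<in> Z\<close> by blast
        then show "z \<in> X" using \<open>x \<in> X\<close> by simp
      qed
    qed (use Z in blast)
  qed
qed

lemma rcomp_conc: assumes "prefix_code X" "X \<noteq> {}" "Y \<noteq> {}"
  shows "rcomp (conc X Y) \<longleftrightarrow> rcomp X \<and> rcomp Y"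
proof
  assume r: "rcomp (conc X Y)"
  have "rcomp X" unfolding rcomp_def
  proof
    fix w
    obtain x y where xy: "x \<in> X" "y \<in> Y" "prefix (x@y) w \<or> prefix w (x@y)"
      using r unfolding rcomp_def conc_def by blast
    then have "prefix x w \<or> prefix w x"
      by (metis prefix_order.trans prefixI prefix_same_cases)
    then show "\<exists>x\<in>X. prefix x w \<or> prefix w x" using xy by blast
  qed
  moreover have "rcomp Y" unfolding rcomp_def
  proof
    fix w
    obtain x0 where x0: "x0 \<in> X" using assms by blast
    obtain x y where xy: "x \<in> X" "y \<in> Y" "prefix (x@y) (x0@w) \<or> prefix (x0@w) (x@y)"
      using r unfolding rcomp_def conc_def by blast
    then have "prefix x x0 \<or> prefix x0 x"
      by (metis prefix_order.trans prefixI prefix_same_cases)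
    then have "x = x0" using pc_strict[OF assms(1)] xy x0 by metis
    then have "prefix y w \<or> prefix w y" using xy by simp
    then show "\<exists>y\<in>Y. prefix y w \<or> prefix w y" using xy by blast
  qed
  ultimately show "rcomp X \<and> rcomp Y" ..
next
  assume r: "rcomp X \<and> rcomp Y"
  show "rcomp (conc X Y)" unfolding rcomp_def
  proof
    fix w
    obtain x where x: "x \<in> X" "prefix x w \<or> prefix w x" using r unfolding rcomp_def by blast
    obtain y0 where y0: "y0 \<in> Y" using assms by blast
    show "\<exists>z\<in>conc X Y. prefix z w \<or> prefix w z"
    proof (cases "prefix x w")
      case True
      then obtain u where u: "w = x@u" by (auto simp: prefix_def)
      obtain y where "y \<in> Y" "prefix y u \<or> prefix u y" using r unfolding rcomp_def by blast
      then have "prefix (x@y) w \<or> prefix w (x@y)" using u by auto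
      then show ?thesis using conc_in[OF x(1) \<open>y \<in> Y\<close>] by blast
    next
      case False
      then have "prefix w (x@y0)" using x by (meson prefix_order.trans prefixI)
      then show ?thesis using conc_in[OF x(1) y0] by blast
    qed
  qed
qed

lemma lcomp_conc: assumes "suffix_code Y" "X \<noteq> {}" "Y \<noteq> {}"
  shows "lcomp (conc X Y) \<longleftrightarrow> lcomp X \<and> lcomp Y"
proof
  assume r: "lcomp (conc X Y)"
  have "lcomp Y" unfolding lcomp_def
  proof
    fix w
    obtain x y where xy: "x \<in> X" "y \<in> Y" "suffix (x@y) w \<or> suffix w (x@y)"
      using r unfolding lcomp_def conc_def by blast
    then have "suffix y w \<or> suffix w y"
      by (metis suffix_order.trans suffixI suffix_same_cases)
    then show "\<exists>y\<in>Y. suffix y w \<or> suffix w y" using xy by blast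
  qed
  moreover have "lcomp X" unfolding lcomp_def
  proof
    fix w
    obtain y0 where y0: "y0 \<in> Y" using assms by blast
    obtain x y where xy: "x \<in> X" "y \<in> Y" "suffix (x@y) (w@y0) \<or> suffix (w@y0) (x@y)"
      using r unfolding lcomp_def conc_def by blast
    then have "suffix y y0 \<or> suffix y0 y"
      by (metis suffix_order.trans suffixI suffix_same_cases)
    then have "y = y0" using sc_strict[OF assms(1)] xy y0 by metis
    then have "suffix x w \<or> suffix w x" using xy by (simp add: suffix_def)
    then show "\<exists>x\<in>X. suffix x w \<or> suffix w x" using xy by blast
  qed
  ultimately show "lcomp X \<and> lcomp Y" by blast
next
  assume r: "lcomp X \<and> lcomp Y"
  show "lcomp (conc X Y)" unfolding lcomp_def
  proof
    fix w
    obtain y where y: "y \<in> Y" "suffix y w \<or> suffix w y" using r unfolding lcomp_def by blast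
    obtain x0 where x0: "x0 \<in> X" using assms by blast
    show "\<exists>z\<in>conc X Y. suffix z w \<or> suffix w z"
    proof (cases "suffix y w")
      case True
      then obtain u where u: "w = u@y" by (auto simp: suffix_def)
      obtain x where "x \<in> X" "suffix x u \<or> suffix u x" using r unfolding lcomp_def by blast
      then have "suffix (x@y) w \<or> suffix w (x@y)" using u by (auto simp: suffix_def)
      then show ?thesis using conc_in[OF \<open>x \<in> X\<close> y(1)] by blast
    next
      case False
      then have "suffix w (x0@y)" using y by (meson suffix_order.trans suffixI)
      then show ?thesis using conc_in[OF x0 y(1)] by blast
    qed
  qed
qed



definition star :: "'a list set \<Rightarrow> 'a list set" where
  "star X = {concat xs | xs. set xs \<subseteq> X}"

lemma star_nil: "[] \<in> star X" unfolding star_def by (rule CollectI, rule exI[of _ "[]"]) simp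

lemma star_app: "a \<in> star X \<Longrightarrow> b \<in> star X \<Longrightarrow> a @ b \<in> star X"
proof -
  assume "a \<in> star X" "b \<in> star X"
  then obtain as bs where "a = concat as" "set as \<subseteq> X" "b = concat bs" "set bs \<subseteq> X" unfolding star_def by blast
  then show ?thesis unfolding star_def by (intro CollectI exI[of _ "as @ bs"]) auto
qed

lemma star_single: "x \<in> X \<Longrightarrow> x \<in> star X"
  unfolding star_def by (auto intro!: exI[of _ "[x]"])

lemma star_first: "r \<in> star X \<Longrightarrow> r \<noteq> [] \<Longrightarrow> \<exists>x\<in>X. prefix x r"
proof -
  assume "r \<in> star X" "r \<noteq> []"
  then obtain xs where "r = concat xs" "set xs \<subseteq> X" unfolding star_def by blast
  then show ?thesis using \<open>r \<noteq> []\<close> by (cases xs) (auto intro: prefixI)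
qed

lemma star_left_unit: assumes "prefix_code X" shows "p \<in> star X \<Longrightarrow> p @ r \<in> star X \<Longrightarrow> r \<in> star X"
proof -
  have ne: "[] \<notin> X" using assms prefix_code_def by blast
  have "\<And>r ys. set ys \<subseteq> X \<Longrightarrow> concat xs @ r = concat ys \<Longrightarrow> set xs \<subseteq> X \<Longrightarrow> r \<in> star X" for xs
  proof (induction xs)
    case Nil then show ?case unfolding star_def by auto
  next
    case (Cons a as)
    have aX: "a \<in> X" using Cons.prems by simp
    then have "a \<noteq> []" using ne by auto
    then obtain b bs where ys: "ys = b # bs" using Cons.prems by (cases ys) auto
    have "a @ (concat as @ r) = b @ concat bs" using Cons.prems ys by simp
    from pc_cancel[OF assms aX _ this] have "concat as @ r = concat bs" using Cons.prems ys by auto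
    then show ?case using Cons.IH[of bs r] Cons.prems ys by auto
  qed
  moreover assume "p \<in> star X" "p @ r \<in> star X"
  ultimately show "r \<in> star X" unfolding star_def by blast
qed

definition dead :: "'a list set \<Rightarrow> 'a list \<Rightarrow> bool" where
  "dead X u \<longleftrightarrow> (\<forall>x\<in>X. \<not> prefix x u \<and> \<not> prefix u x)"

lemma dead_nostar: "dead X u \<Longrightarrow> r \<in> star X \<Longrightarrow> r \<noteq> [] \<Longrightarrow> prefix r (u @ q) \<Longrightarrow> False"
  using star_first[of r X] unfolding dead_def
  by (meson prefix_order.trans prefixI prefix_same_cases)

lemma decomp: assumes "lcomp X" "[] \<notin> X"
  shows "\<exists>s y. t = s @ y \<and> y \<in> star X \<and> (\<exists>x\<in>X. suffix s x)"
proof (induction t rule: length_induct)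
  case (1 t)
  obtain x where x: "x \<in> X" "suffix x t \<or> suffix t x" using assms(1) unfolding lcomp_def by blast
  show ?case
  proof (cases "suffix x t")
    case True
    then obtain t' where t': "t = t' @ x" by (auto simp: suffix_def)
    have "x \<noteq> []" using x assms(2) by auto
    then have "length t' < length t" using t' by simp
    then obtain s y where "t' = s @ y" "y \<in> star X" "\<exists>x\<in>X. suffix s x" using 1 by blast
    then show ?thesis using t' star_app[OF _ star_single[OF x(1)]] by (intro exI[of _ s] exI[of _ "y@x"]) auto
  next
    case False
    then show ?thesis using x star_nil by (intro exI[of _ t] exI[of _ "[]"]) auto
  qed
qed

lemma words_finite: "finite {t::('a::finite) list. length t = n}"
  using finite_lists_length_eq[of "UNIV::'a set" n] by simp
lemma words_card: "card {t::('a::finite) list. length t = n} = card (UNIV::'a set) ^ n"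
  using card_lists_length_eq[of "UNIV::'a set" n] by simp

lemma deep: fixes X :: "('a::finite) list set"
  assumes pc: "prefix_code X" and th: "thin X" and lc: "lcomp X" and ne: "X \<noteq> {}"
  shows "rcomp X"
proof (rule ccontr)
  assume "\<not> rcomp X"
  then obtain u where du: "dead X u" unfolding rcomp_def dead_def by blast
  obtain w where w: "\<forall>x\<in>X. \<not> sublist w x" using th unfolding thin_def by blast
  have neX: "[] \<notin> X" using pc prefix_code_def by blast
  have une: "u \<noteq> []" using du ne unfolding dead_def by auto
  define k where "k = card (UNIV::'a set)"
  have k1: "k \<ge> 1" unfolding k_def by (simp add: Suc_le_eq card_gt_0_iff)
  define m where "m = length u"
  define L where "L = length w"
  define W where "W n = {t::'a list. length t = n}" for n
  define C where "C j = {y \<in> star X. length y = j}" for j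
  have Wfin: "finite (W n)" for n unfolding W_def by (rule words_finite)
  have Wcard: "card (W n) = k ^ n" for n unfolding W_def k_def by (rule words_card)
  have Cfin: "finite (C j)" for j using Wfin[of j] by (rule finite_subset[rotated]) (auto simp: C_def W_def)
  have upper: "(\<Sum>j\<le>N. card (C j) * k^(N-j)) \<le> k^(N+m)" for N
  proof -
    define T where "T = (\<Union>j\<in>{..N}. C j \<times> W (N-j))"
    have "card T = (\<Sum>j\<le>N. card (C j \<times> W (N-j)))"
      unfolding T_def
    proof (rule card_UN_disjoint)
      show "\<forall>i\<in>{..N}. finite (C i \<times> W (N - i))" using Cfin Wfin by blast
      show "\<forall>i\<in>{..N}. \<forall>j\<in>{..N}. i \<noteq> j \<longrightarrow> C i \<times> W (N - i) \<inter> C j \<times> W (N - j) = {}"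
        unfolding C_def by auto
    qed simp
    also have "\<dots> = (\<Sum>j\<le>N. card (C j) * k^(N-j))" by (simp add: card_cartesian_product Wcard)
    finally have cT: "card T = (\<Sum>j\<le>N. card (C j) * k^(N-j))" .
    have inj: "inj_on (\<lambda>(p,q). p @ u @ q) T"
    proof (rule inj_onI, clarify)
      fix p q p' q' assume pq: "(p,q) \<in> T" "(p',q') \<in> T" "p @ u @ q = p' @ u @ q'"
      have ps: "p \<in> star X" "p' \<in> star X" using pq(1,2) unfolding T_def C_def by auto
      have len: "length p + length q = N" "length p' + length q' = N" using pq(1,2) unfolding T_def C_def W_def by auto
      have gen: "p = p'" if "p \<in> star X" "p' \<in> star X" "p @ u @ q = p' @ u @ q'" "length p \<le> length p'" for p p' q q'
      proof -
        have "prefix p p'" using that(3,4) by (metis prefixI prefix_length_prefix)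
        then obtain r where r: "p' = p @ r" by (auto simp: prefix_def)
        show "p = p'"
        proof (rule ccontr)
          assume "p \<noteq> p'"
          then have "r \<noteq> []" using r by simp
          have "r \<in> star X" using star_left_unit[OF pc that(1)] that(2) r by simp
          have "r @ u @ q' = u @ q" using that(3) r by simp
          then have "prefix r (u @ q)" by (metis prefixI)
          then show False using dead_nostar[OF du \<open>r \<in> star X\<close> \<open>r \<noteq> []\<close>] by blast
        qed
      qed
      have "p = p'"
      proof (cases "length p \<le> length p'")
        case True then show ?thesis using gen[OF ps pq(3)] by blast
      next
        case False then show ?thesis using gen[OF ps(2,1) pq(3)[symmetric]] by simp
      qed
      then show "p = p' \<and> q = q'" using pq(3) by simp
    qed
    have sub: "(\<lambda>(p,q). p @ u @ q) ` T \<subseteq> W (N+m)"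
      unfolding T_def C_def W_def m_def by auto
    have "card T \<le> card (W (N+m))"
      using card_inj_on_le[OF inj sub Wfin] .
    then show ?thesis using cT Wcard by simp
  qed
  have lower: "k^(n-L) \<le> (\<Sum>i<L. card (C (n-i)))" if nL: "n \<ge> L" for n
  proof -
    define V where "V = (\<lambda>r. w @ r) ` W (n-L)"
    have "card V = k^(n-L)" unfolding V_def using Wcard by (simp add: card_image inj_on_def)
    define D where "D = (\<Union>i\<in>{..<L}. {take i w} \<times> C (n-i))"
    have "V \<subseteq> (\<lambda>(s,y). s @ y) ` D"
    proof
      fix t assume "t \<in> V"
      then obtain r where r: "t = w @ r" "length r = n - L" unfolding V_def W_def by auto
      obtain s y where sy: "t = s @ y" "y \<in> star X" "\<exists>x\<in>X. suffix s x" using decomp[OF lc neX] by blast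
      have ls: "length s < L"
      proof (rule ccontr)
        assume "\<not> length s < L"
        then have "prefix w s" using sy(1) r(1) unfolding L_def by (metis not_less prefixI prefix_length_prefix)
        then obtain x where "x \<in> X" "suffix s x" using sy(3) by blast
        then have "sublist w x" using \<open>prefix w s\<close> by (meson prefix_imp_sublist suffix_imp_sublist sublist_order.order.trans)
        then show False using w \<open>x \<in> X\<close> by blast
      qed
      have "s = take (length s) w" using sy(1) r(1) ls unfolding L_def
        by (metis append_eq_append_conv_if append_take_drop_id length_take min.strict_order_iff take_all_iff)
      moreover have "length y = n - length s" using sy(1) r nL unfolding L_def by (metis add_diff_cancel_left' length_append le_add_diff_inverse)
      ultimately have "(s,y) \<in> D" unfolding D_def C_def using ls sy(2) by auto
      then show "t \<in> (\<lambda>(s,y). s @ y) ` D" using sy(1) by force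
    qed
    moreover have "finite D" unfolding D_def using Cfin by auto
    ultimately have "card V \<le> card D" by (meson card_image_le card_mono finite_imageI le_trans)
    also have "card D \<le> (\<Sum>i<L. card ({take i w} \<times> C (n-i)))" unfolding D_def by (rule card_UN_le) simp
    also have "\<dots> = (\<Sum>i<L. card (C (n-i)))" by (simp add: card_cartesian_product)
    finally show ?thesis using \<open>card V = k^(n-L)\<close> by simp
  qed
  define N where "N = L + L * k^(m+L)"
  define g where "g j = card (C j) * k^(N-j)" for j
  have step1: "k^(N-L) \<le> (\<Sum>i<L. g (n-i))" if "L \<le> n" "n \<le> N" for n
  proof -
    have "k^(N-L) = k^(n-L) * k^(N-n)" using that by (simp add: power_add[symmetric])
    also have "\<dots> \<le> (\<Sum>i<L. card (C (n-i))) * k^(N-n)" using lower[OF that(1)] by simp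
    also have "\<dots> = (\<Sum>i<L. card (C (n-i)) * k^(N-n))" by (simp add: sum_distrib_right)
    also have "\<dots> \<le> (\<Sum>i<L. g (n-i))"
    proof (rule sum_mono)
      fix i assume "i \<in> {..<L}"
      then have "N - n \<le> N - (n-i)" using that by auto
      then have "k^(N-n) \<le> k^(N-(n-i))" using k1 by (simp add: power_increasing)
      then show "card (C (n-i)) * k^(N-n) \<le> g (n-i)" unfolding g_def by simp
    qed
    finally show ?thesis .
  qed
  have "(\<Sum>n\<in>{L..N}. k^(N-L)) \<le> (\<Sum>n\<in>{L..N}. \<Sum>i<L. g (n-i))"
    using step1 by (intro sum_mono) auto
  also have "\<dots> = (\<Sum>i<L. \<Sum>n\<in>{L..N}. g (n-i))" by (rule sum.swap)
  also have "\<dots> \<le> (\<Sum>i<L. \<Sum>j\<le>N. g j)"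
  proof (rule sum_mono)
    fix i assume i: "i \<in> {..<L}"
    have inj: "inj_on (\<lambda>n. n - i) {L..N}" using i by (auto simp: inj_on_def)
    have "(\<Sum>n\<in>{L..N}. g (n-i)) = (\<Sum>j\<in>(\<lambda>n. n - i) ` {L..N}. g j)"
      by (simp add: sum.reindex[OF inj])
    also have "\<dots> \<le> (\<Sum>j\<le>N. g j)" by (rule sum_mono2) auto
    finally show "(\<Sum>n\<in>{L..N}. g (n-i)) \<le> (\<Sum>j\<le>N. g j)" .
  qed
  also have "\<dots> = L * (\<Sum>j\<le>N. g j)" by simp
  also have "\<dots> \<le> L * k^(N+m)" using upper[of N] unfolding g_def by simp
  finally have ineq: "(N + 1 - L) * k^(N-L) \<le> L * k^(N+m)" by simp
  have "L * k^(N+m) = (L * k^(m+L)) * k^(N-L)" unfolding N_def by (simp add: power_add[symmetric] algebra_simps)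
  with ineq have "(N + 1 - L) * k^(N-L) \<le> (L * k^(m+L)) * k^(N-L)" by simp
  then have "N + 1 - L \<le> L * k^(m+L)" using k1 by simp
  then show False unfolding N_def by simp
qed



lemma maxbifix_comp: assumes "maximal_bifix_code X" "X \<noteq> {}" shows "rcomp X \<or> lcomp X"
proof (rule ccontr)
  assume "\<not> (rcomp X \<or> lcomp X)"
  then obtain u v where u: "\<forall>x\<in>X. \<not> prefix x u \<and> \<not> prefix u x" and v: "\<forall>x\<in>X. \<not> suffix x v \<and> \<not> suffix v x"
    unfolding rcomp_def lcomp_def by blast
  have b: "bifix_code X" using assms maximal_bifix_code_def by blast
  have une: "u \<noteq> []" using u assms(2) by auto
  define z where "z = u @ v"
  have zX: "z \<notin> X" using u unfolding z_def by auto
  have pz: "\<not> prefix x z \<and> \<not> prefix z x" if "x \<in> X" for x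
    using u that unfolding z_def by (meson prefix_order.trans prefixI prefix_same_cases)
  have sz: "\<not> suffix x z \<and> \<not> suffix z x" if "x \<in> X" for x
    using v that unfolding z_def by (meson suffix_order.trans suffixI suffix_same_cases)
  have zne: "z \<noteq> []" using une z_def by simp
  have bp: "prefix_code X" "suffix_code X" using b bifix_code_def by blast+
  have "prefix_code (insert z X)" unfolding prefix_code_def
  proof (intro conjI ballI impI)
    show "[] \<notin> insert z X" using zne bp(1) prefix_code_def by blast
    fix a c assume "a \<in> insert z X" "c \<in> insert z X" "strict_prefix a c"
    then show False using pz bp(1) unfolding prefix_code_def strict_prefix_def by blast
  qed
  moreover have "suffix_code (insert z X)" unfolding suffix_code_def
  proof (intro conjI ballI impI)
    show "[] \<notin> insert z X" using zne bp(2) suffix_code_def by blast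
    fix a c assume "a \<in> insert z X" "c \<in> insert z X" "strict_suffix a c"
    then show False using sz bp(2) unfolding suffix_code_def strict_suffix_def by blast
  qed
  ultimately have "bifix_code (insert z X)" unfolding bifix_code_def by blast
  then have "insert z X = X" using assms unfolding maximal_bifix_code_def by blast
  then show False using zX by blast
qed

lemma maxbifix_rcomp: fixes X :: "('a::finite) list set"
  assumes "maximal_bifix_code X" "thin X" "X \<noteq> {}" shows "rcomp X"
proof -
  have "prefix_code X" using assms maximal_bifix_code_def bifix_code_def by blast
  then show ?thesis using maxbifix_comp[OF assms(1,3)] deep[OF _ assms(2) _ assms(3)] by blast
qed

lemma sublist_app_split: "sublist (a @ b) (c @ d) \<Longrightarrow> sublist a c \<or> sublist b d"
proof -
  assume "sublist (a @ b) (c @ d)"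
  then obtain p q where pq: "c @ d = p @ a @ b @ q" unfolding sublist_def by auto
  show ?thesis
  proof (cases "length (p @ a) \<le> length c")
    case True
    have "prefix (p @ a) (c @ d)" unfolding pq by (metis append_assoc prefixI)
    moreover have "prefix c (c @ d)" by (rule prefixI) simp
    ultimately
    have "prefix (p @ a) c" using True prefix_length_prefix by blast
    then show ?thesis unfolding sublist_def prefix_def by auto
  next
    case False
    have "suffix (b @ q) (c @ d)" unfolding pq by (metis append_assoc suffixI)
    moreover have "suffix d (c @ d)" by (rule suffixI) simp
    moreover have "length (b @ q) \<le> length d" using False arg_cong[OF pq, of length] by simp
    ultimately have "suffix (b @ q) d" using suffix_length_suffix by blast
    then show ?thesis unfolding sublist_def suffix_def by auto
  qed
qed

lemma conc_nonempty: "X \<noteq> {} \<Longrightarrow> Y \<noteq> {} \<Longrightarrow> conc X Y \<noteq> {}" unfolding conc_def by blast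

theorem theoremT:
  fixes X Y :: "('a::finite) list set"
  assumes "X \<noteq> {}" and "Y \<noteq> {}" and "[] \<notin> X" and "[] \<notin> Y"
  shows
    "((strong_alternative_code X Y \<and> prefix_code (conc X Y))
        \<longleftrightarrow> (prefix_code X \<and> bifix_code Y))
   \<and> ((strong_alternative_code X Y \<and> maximal_prefix_code (conc X Y))
        \<longleftrightarrow> (maximal_prefix_code X \<and> maximal_prefix_code Y \<and> bifix_code Y))
   \<and> ((strong_alternative_code X Y \<and> suffix_code (conc X Y))
        \<longleftrightarrow> (bifix_code X \<and> suffix_code Y))
   \<and> ((strong_alternative_code X Y \<and> maximal_suffix_code (conc X Y))
        \<longleftrightarrow> (maximal_suffix_code X \<and> bifix_code X \<and> maximal_suffix_code Y))
   \<and> ((strong_alternative_code X Y \<and> bifix_code (conc X Y))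
        \<longleftrightarrow> (bifix_code X \<and> bifix_code Y))
   \<and> ((strong_alternative_code X Y \<and> thin (conc X Y) \<and> maximal_bifix_code (conc X Y))
        \<longleftrightarrow> (thin X \<and> maximal_bifix_code X \<and> thin Y \<and> maximal_bifix_code Y))"
proof -
  note XY = assms(1,2)
  have cne: "conc X Y \<noteq> {}" using conc_nonempty XY by blast
  have P1: "(strong_alternative_code X Y \<and> prefix_code (conc X Y)) \<longleftrightarrow> (prefix_code X \<and> bifix_code Y)"
    using SA_prefix_dest SA_prefix_intro[OF XY] prefix_conc bifix_code_def by metis
  have P3: "(strong_alternative_code X Y \<and> suffix_code (conc X Y)) \<longleftrightarrow> (bifix_code X \<and> suffix_code Y)"
    using SA_suffix_dest SA_suffix_intro[OF XY] suffix_conc bifix_code_def by metis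
  have P5: "(strong_alternative_code X Y \<and> bifix_code (conc X Y)) \<longleftrightarrow> (bifix_code X \<and> bifix_code Y)"
    using P1 P3 bifix_code_def by metis
  have P2: "(strong_alternative_code X Y \<and> maximal_prefix_code (conc X Y))
        \<longleftrightarrow> (maximal_prefix_code X \<and> maximal_prefix_code Y \<and> bifix_code Y)"
  proof
    assume h: "strong_alternative_code X Y \<and> maximal_prefix_code (conc X Y)"
    then have pc: "prefix_code (conc X Y)" using maximal_prefix_code_def by blast
    then have a: "prefix_code X" "bifix_code Y" using P1 h by blast+
    have "rcomp (conc X Y)" using max_prefix_iff[OF pc cne] h by blast
    then have "rcomp X" "rcomp Y" using rcomp_conc[OF a(1) XY] by blast+
    then show "maximal_prefix_code X \<and> maximal_prefix_code Y \<and> bifix_code Y"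
      using max_prefix_iff a XY bifix_code_def by metis
  next
    assume h: "maximal_prefix_code X \<and> maximal_prefix_code Y \<and> bifix_code Y"
    then have a: "prefix_code X" "prefix_code Y" "bifix_code Y" using maximal_prefix_code_def by blast+
    have "rcomp X" "rcomp Y" using max_prefix_iff a XY h by metis+
    then have "rcomp (conc X Y)" using rcomp_conc[OF a(1) XY] by blast
    moreover have pc: "prefix_code (conc X Y)" using prefix_conc a by blast
    ultimately have "maximal_prefix_code (conc X Y)" using max_prefix_iff[OF pc cne] by blast
    then show "strong_alternative_code X Y \<and> maximal_prefix_code (conc X Y)"
      using SA_prefix_intro[OF XY a(1,3)] by blast
  qed
  have P4: "(strong_alternative_code X Y \<and> maximal_suffix_code (conc X Y))
        \<longleftrightarrow> (maximal_suffix_code X \<and> bifix_code X \<and> maximal_suffix_code Y)"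
  proof
    assume h: "strong_alternative_code X Y \<and> maximal_suffix_code (conc X Y)"
    then have pc: "suffix_code (conc X Y)" using maximal_suffix_code_def by blast
    then have a: "bifix_code X" "suffix_code Y" using P3 h by blast+
    have "lcomp (conc X Y)" using max_suffix_iff[OF pc cne] h by blast
    then have "lcomp X" "lcomp Y" using lcomp_conc[OF a(2) XY] by blast+
    then show "maximal_suffix_code X \<and> bifix_code X \<and> maximal_suffix_code Y"
      using max_suffix_iff a XY bifix_code_def by metis
  next
    assume h: "maximal_suffix_code X \<and> bifix_code X \<and> maximal_suffix_code Y"
    then have a: "suffix_code X" "suffix_code Y" "bifix_code X" using maximal_suffix_code_def by blast+
    have "lcomp X" "lcomp Y" using max_suffix_iff a XY h by metis+
    then have "lcomp (conc X Y)" using lcomp_conc[OF a(2) XY] by blast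
    moreover have pc: "suffix_code (conc X Y)" using suffix_conc a by blast
    ultimately have "maximal_suffix_code (conc X Y)" using max_suffix_iff[OF pc cne] by blast
    then show "strong_alternative_code X Y \<and> maximal_suffix_code (conc X Y)"
      using SA_suffix_intro[OF XY a(3,2)] by blast
  qed
  have P6: "(strong_alternative_code X Y \<and> thin (conc X Y) \<and> maximal_bifix_code (conc X Y))
        \<longleftrightarrow> (thin X \<and> maximal_bifix_code X \<and> thin Y \<and> maximal_bifix_code Y)"
  proof
    assume h: "strong_alternative_code X Y \<and> thin (conc X Y) \<and> maximal_bifix_code (conc X Y)"
    then have bc: "bifix_code (conc X Y)" using maximal_bifix_code_def by blast
    then have b: "bifix_code X" "bifix_code Y" using P5 h by blast+
    obtain x0 where x0: "x0 \<in> X" using XY by blast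
    obtain y0 where y0: "y0 \<in> Y" using XY by blast
    obtain w where w: "\<forall>z\<in>conc X Y. \<not> sublist w z" using h thin_def by blast
    have "thin X" unfolding thin_def
    proof (intro exI ballI)
      fix x assume "x \<in> X"
      show "\<not> sublist w x"
      proof
        assume "sublist w x"
        then have "sublist w (x @ y0)" by (meson sublist_append_rightI sublist_order.order.trans)
        then show False using w conc_in[OF \<open>x \<in> X\<close> y0] by blast
      qed
    qed
    moreover have "thin Y" unfolding thin_def
    proof (intro exI ballI)
      fix y assume "y \<in> Y"
      show "\<not> sublist w y"
      proof
        assume "sublist w y"
        then have "sublist w (x0 @ y)" by (meson sublist_append_leftI sublist_order.order.trans)
        then show False using w conc_in[OF x0 \<open>y \<in> Y\<close>] by blast
      qed
    qed
    moreover have "maximal_bifix_code X" unfolding maximal_bifix_code_def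
    proof (intro conjI allI impI b(1))
      fix Z assume Z: "bifix_code Z \<and> X \<subseteq> Z"
      have "bifix_code (conc Z Y)" using Z b prefix_conc suffix_conc bifix_code_def by metis
      moreover have "conc X Y \<subseteq> conc Z Y" using Z unfolding conc_def by blast
      ultimately have eq: "conc Z Y = conc X Y" using h maximal_bifix_code_def by blast
      show "Z = X"
      proof
        show "Z \<subseteq> X"
        proof
          fix z assume "z \<in> Z"
          then have "z @ y0 \<in> conc X Y" using eq conc_in[OF _ y0] by blast
          then obtain x y where "x \<in> X" "y \<in> Y" "z @ y0 = x @ y" unfolding conc_def by blast
          then have "z = x" using sc_cancel[of Y y0 y z x] b(2) y0 bifix_code_def by blast
          then show "z \<in> X" using \<open>x \<in> X\<close> by simp
        qed
      qed (use Z in blast)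
    qed
    moreover have "maximal_bifix_code Y" unfolding maximal_bifix_code_def
    proof (intro conjI allI impI b(2))
      fix Z assume Z: "bifix_code Z \<and> Y \<subseteq> Z"
      have "bifix_code (conc X Z)" using Z b prefix_conc suffix_conc bifix_code_def by metis
      moreover have "conc X Y \<subseteq> conc X Z" using Z unfolding conc_def by blast
      ultimately have eq: "conc X Z = conc X Y" using h maximal_bifix_code_def by blast
      show "Z = Y"
      proof
        show "Z \<subseteq> Y"
        proof
          fix z assume "z \<in> Z"
          then have "x0 @ z \<in> conc X Y" using eq conc_in[OF x0] by blast
          then obtain x y where "x \<in> X" "y \<in> Y" "x0 @ z = x @ y" unfolding conc_def by blast
          then have "z = y" using pc_cancel[of X x0 x z y] b(1) x0 bifix_code_def by blast
          then show "z \<in> Y" using \<open>y \<in> Y\<close> by simp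
        qed
      qed (use Z in blast)
    qed
    ultimately show "thin X \<and> maximal_bifix_code X \<and> thin Y \<and> maximal_bifix_code Y" by blast
  next
    assume h: "thin X \<and> maximal_bifix_code X \<and> thin Y \<and> maximal_bifix_code Y"
    then have b: "bifix_code X" "bifix_code Y" using maximal_bifix_code_def by blast+
    have SA: "strong_alternative_code X Y" and bc: "bifix_code (conc X Y)" using P5 b by blast+
    obtain w where w: "\<forall>x\<in>X. \<not> sublist w x" using h thin_def by blast
    obtain v where v: "\<forall>y\<in>Y. \<not> sublist v y" using h thin_def by blast
    have "thin (conc X Y)" unfolding thin_def
    proof (intro exI[of _ "w @ v"] ballI)
      fix z assume "z \<in> conc X Y"
      then obtain x y where "x \<in> X" "y \<in> Y" "z = x @ y" unfolding conc_def by blast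
      then show "\<not> sublist (w @ v) z" using sublist_app_split w v by blast
    qed
    moreover have "maximal_bifix_code (conc X Y)" unfolding maximal_bifix_code_def
    proof (intro conjI allI impI bc)
      fix Z assume Z: "bifix_code Z \<and> conc X Y \<subseteq> Z"
      have "rcomp X" "rcomp Y" using maxbifix_rcomp h XY by blast+
      moreover have pX: "prefix_code X" using b bifix_code_def by blast
      ultimately have "rcomp (conc X Y)" using rcomp_conc[OF pX XY] by blast
      moreover have pc: "prefix_code (conc X Y)" using bc bifix_code_def by blast
      ultimately have "maximal_prefix_code (conc X Y)" using max_prefix_iff[OF pc cne] by blast
      then show "Z = conc X Y" using Z unfolding maximal_prefix_code_def bifix_code_def by blast
    qed
    ultimately show "strong_alternative_code X Y \<and> thin (conc X Y) \<and> maximal_bifix_code (conc X Y)"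
      using SA by blast
  qed
  show ?thesis using P1 P2 P3 P4 P5 P6 by blast
qed


end
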